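(* Let $b\ge2$ and $N\ge2$ be integers with $N$ even, let $c_j$ ($j\in\mathbb{Z}$) be given reals, let $\beta\ge0$ be an integer, and let $j\ge0$ be an index and $\Delta$ a real number. Run the following procedure (the update of an \textsc{Ola} buffer): start with a map $deltas$ (default value $0$) containing the single key $j$ with $deltas_j=\Delta$. For $s=0,1,\ldots,\beta$: let $K$ be the set of keys of $deltas$ at the start of this iteration; for each $i\in K$ such that $\lfloor i/b^s\rfloor$ is not divisible by $b$, set $\delta=deltas_i$, then for each $m=-\frac N2+1,\ldots,\frac N2$ add $c_{-bm+(\lfloor i/b^s\rfloor \bmod b)}\,\delta$ to $deltas_{(\lfloor i/b^{s+1}\rfloor+m)b^{s+1}}$, then (after possibly adding $deltas_i$ to the buffer entry $B_{i/b}$ when $b\mid i$) remove key $i$ from $deltas$. Then at the start and at the end of every iteration $s$, the map $deltas$ has at most $2N$ keys; that is, the changes are propagated from each scale to the next over at most $2N$ cells (the update dag has at most $2N$ nodes at each level).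
   Context: The \textsc{Ola} buffer is a hierarchical overlapped bin buffer over an external array, with bin size $b$, $N$ buffered moments and Lagrange coefficients $c_j$ of degree $N-1$; cells whose index is divisible by $b^{s-1}$ are said to belong to scale $s$ (scale $0$ being the external array), and higher-scale values are stored in place. The procedure above propagates the effect of changing the external-array entry $a_j$ by $\Delta$ through the scales. *)

theory Defs
  imports Complex_Main
begin

text \<open>State of the map deltas: its set of keys together with its values
  (default value 0 for absent keys).\<close>
type_synonym ola_map = "int set \<times> (int \<Rightarrow> real)"

definition ola_add :: "int \<Rightarrow> real \<Rightarrow> ola_map \<Rightarrow> ola_map" where
  "ola_add t v st = (insert t (fst st), (snd st)(t := snd st t + v))"

definition ola_process :: "int \<Rightarrow> int \<Rightarrow> (int \<Rightarrow> real) \<Rightarrow> nat \<Rightarrow> int \<Rightarrow> ola_map \<Rightarrow> ola_map" where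
  "ola_process b N c s i st =
     (if \<not> b dvd (i div b ^ s) then
        (let \<delta> = snd st i;
             st' = fold (\<lambda>m acc. ola_add ((i div b ^ (s + 1) + m) * b ^ (s + 1))
                                        (c (- b * m + (i div b ^ s) mod b) * \<delta>) acc)
                        [- (N div 2) + 1 .. N div 2] st
         in (fst st' - {i}, (snd st')(i := 0)))
      else st)"

definition ola_iter :: "int \<Rightarrow> int \<Rightarrow> (int \<Rightarrow> real) \<Rightarrow> nat \<Rightarrow> ola_map \<Rightarrow> ola_map" where
  "ola_iter b N c s st = fold (ola_process b N c s) (sorted_list_of_set (fst st)) st"

text \<open>State of deltas at the start of iteration s (= end of iteration s-1).\<close>
fun ola_state :: "int \<Rightarrow> int \<Rightarrow> (int \<Rightarrow> real) \<Rightarrow> int \<Rightarrow> real \<Rightarrow> nat \<Rightarrow> ola_map" where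
  "ola_state b N c j \<Delta> 0 = ({j}, (\<lambda>_. 0)(j := \<Delta>))"
| "ola_state b N c j \<Delta> (Suc s) = ola_iter b N c s (ola_state b N c j \<Delta> s)"

end

theory Submission
  imports Defs
begin

lemma fold_add_keys:
  "fst (fold (\<lambda>m acc. ola_add (f m) (v m) acc) ms st) = fst st \<union> f ` set ms"
  by (induction ms arbitrary: st) (auto simp: ola_add_def)

lemma process_keys:
  "fst (ola_process b N c s i st) \<subseteq>
     (if \<not> b dvd (i div b ^ s) then (fst st - {i}) \<union>
        (\<lambda>m. (i div b ^ (s + 1) + m) * b ^ (s + 1)) ` {- (N div 2) + 1 .. N div 2}
      else fst st)"
proof (cases "b dvd (i div b ^ s)")
  case True then show ?thesis by (simp add: ola_process_def)
next
  case False
  have "fst (fold (\<lambda>m acc. ola_add ((i div b ^ (s + 1) + m) * b ^ (s + 1))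
            (c (- b * m + (i div b ^ s) mod b) * snd st i) acc) [- (N div 2) + 1 .. N div 2] st)
        = fst st \<union> (\<lambda>m. (i div b ^ (s + 1) + m) * b ^ (s + 1)) ` set [- (N div 2) + 1 .. N div 2]"
    by (rule fold_add_keys)
  then show ?thesis using False by (auto simp: ola_process_def Let_def)
qed

lemma fold_process_keys:
  "fst (fold (ola_process b N c s) xs st) \<subseteq>
     (fst st - {i \<in> set xs. \<not> b dvd (i div b ^ s)}) \<union>
     {(i div b ^ (s + 1) + m) * b ^ (s + 1) | i m. i \<in> set xs \<and> \<not> b dvd (i div b ^ s)
         \<and> m \<in> {- (N div 2) + 1 .. N div 2}}"
proof (induction xs arbitrary: st)
  case Nil then show ?case by simp
next
  case (Cons x xs)
  have A: "fst (fold (ola_process b N c s) (x # xs) st) = fst (fold (ola_process b N c s) xs (ola_process b N c s x st))"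
    by simp
  have P: "fst (ola_process b N c s x st) \<subseteq>
     (if \<not> b dvd (x div b ^ s) then (fst st - {x}) \<union>
        (\<lambda>m. (x div b ^ (s + 1) + m) * b ^ (s + 1)) ` {- (N div 2) + 1 .. N div 2}
      else fst st)" by (rule process_keys)
  show ?case
  proof
    fix y assume "y \<in> fst (fold (ola_process b N c s) (x # xs) st)"
    then have "y \<in> fst (fold (ola_process b N c s) xs (ola_process b N c s x st))" by simp
    with Cons.IH[of "ola_process b N c s x st"] have
      "y \<in> (fst (ola_process b N c s x st) - {i \<in> set xs. \<not> b dvd (i div b ^ s)}) \<union>
     {(i div b ^ (s + 1) + m) * b ^ (s + 1) | i m. i \<in> set xs \<and> \<not> b dvd (i div b ^ s)
         \<and> m \<in> {- (N div 2) + 1 .. N div 2}}" by (rule subsetD)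
    then consider
      (a) "y \<in> fst (ola_process b N c s x st)" "y \<notin> {i \<in> set xs. \<not> b dvd (i div b ^ s)}"
    | (t) "y \<in> {(i div b ^ (s + 1) + m) * b ^ (s + 1) | i m. i \<in> set xs \<and> \<not> b dvd (i div b ^ s)
         \<and> m \<in> {- (N div 2) + 1 .. N div 2}}" unfolding Un_iff Diff_iff by argo
    then show "y \<in> (fst st - {i \<in> set (x # xs). \<not> b dvd (i div b ^ s)}) \<union>
     {(i div b ^ (s + 1) + m) * b ^ (s + 1) | i m. i \<in> set (x # xs) \<and> \<not> b dvd (i div b ^ s)
         \<and> m \<in> {- (N div 2) + 1 .. N div 2}}"
    proof cases
      case t
      then obtain i m where im: "y = (i div b ^ (s + 1) + m) * b ^ (s + 1)" "i \<in> set xs"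
        "\<not> b dvd (i div b ^ s)" "m \<in> {- (N div 2) + 1 .. N div 2}" by blast
      show ?thesis apply (rule UnI2) apply (rule CollectI) apply (rule exI[of _ i], rule exI[of _ m])
        using im by simp
    next
      case a
      show ?thesis
      proof (cases "b dvd (x div b ^ s)")
        case True
        with P a have "y \<in> fst st" by auto
        then show ?thesis apply (intro UnI1) using a(2) True by auto
      next
        case False
        with P a(1) have "y \<in> fst st - {x} \<or> y \<in> (\<lambda>m. (x div b ^ (s + 1) + m) * b ^ (s + 1)) ` {- (N div 2) + 1 .. N div 2}"
          by auto
        then show ?thesis
        proof
          assume "y \<in> fst st - {x}" with a(2) show ?thesis by simp
        next
          assume "y \<in> (\<lambda>m. (x div b ^ (s + 1) + m) * b ^ (s + 1)) ` {- (N div 2) + 1 .. N div 2}"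
          then obtain m where m: "y = (x div b ^ (s + 1) + m) * b ^ (s + 1)" "m \<in> {- (N div 2) + 1 .. N div 2}" by blast
          show ?thesis apply (rule UnI2) apply (rule CollectI) apply (rule exI[of _ x], rule exI[of _ m])
            using m False by simp
        qed
      qed
    qed
  qed
qed

definition SS :: "int \<Rightarrow> int \<Rightarrow> nat \<Rightarrow> int \<Rightarrow> int set" where
  "SS b N s L = (\<lambda>k. k * b ^ s) ` {L..<L + 2 * N}"

lemma SS_card: "N \<ge> 0 \<Longrightarrow> int (card (SS b N s L)) \<le> 2 * N"
proof -
  assume "N \<ge> 0"
  have "card (SS b N s L) \<le> card {L..<L + 2 * N}" unfolding SS_def by (rule card_image_le) simp
  then show ?thesis using \<open>N \<ge> 0\<close> by simp
qed

lemma div_range: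
  fixes b N L k :: int
  assumes "b \<ge> 2" "N \<ge> 1" "L \<le> k" "k < L + 2 * N"
  shows "L div b \<le> k div b \<and> k div b \<le> L div b + N"
proof
  show "L div b \<le> k div b" using assms by (simp add: zdiv_mono1)
  show "k div b \<le> L div b + N"
  proof (rule ccontr)
    assume "\<not> ?thesis"
    then have d: "k div b - L div b \<ge> N + 1" by simp
    have "b * (k div b) \<le> k"
      using pos_mod_sign[of b k] mult_div_mod_eq[of b k] assms by linarith
    moreover have "L < b * (L div b) + b"
      using pos_mod_bound[of b L] mult_div_mod_eq[of b L] assms by linarith
    moreover have "b * (N + 1) \<le> b * (k div b - L div b)"
      using d assms by (intro mult_left_mono) auto
    moreover have "b * N \<ge> 2 * N" using assms by (intro mult_right_mono) auto
    ultimately show False using assms by (simp only: right_diff_distrib distrib_left)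
  qed
qed

lemma iter_step:
  fixes b N :: int
  assumes b: "b \<ge> 2" and N: "N \<ge> 2" and "even N"
    and K: "fst st \<subseteq> SS b N s L"
  shows "fst (ola_iter b N c s st) \<subseteq> SS b N (Suc s) (L div b - N div 2 + 1)"
proof -
  let ?L' = "L div b - N div 2 + 1"
  have fin: "finite (fst st)" using K finite_subset unfolding SS_def by blast
  have set_eq: "set (sorted_list_of_set (fst st)) = fst st" using fin by simp
  have bs: "b ^ s > 0" using b by simp
  have pw: "b ^ (s + 1) = b ^ s * b" by simp
  have N2: "N div 2 \<ge> 1" "2 * (N div 2) = N" using N \<open>even N\<close> by auto
  have main: "fst (ola_iter b N c s st) \<subseteq>
     (fst st - {i \<in> fst st. \<not> b dvd (i div b ^ s)}) \<union>
     {(i div b ^ (s + 1) + m) * b ^ (s + 1) | i m. i \<in> fst st \<and> \<not> b dvd (i div b ^ s)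
         \<and> m \<in> {- (N div 2) + 1 .. N div 2}}"
    unfolding ola_iter_def using fold_process_keys[of b N c s "sorted_list_of_set (fst st)" st]
    unfolding set_eq .
  have divk: "(k * b ^ s) div b ^ s = k" "(k * b ^ s) div b ^ (s + 1) = k div b" for k
  proof -
    show "(k * b ^ s) div b ^ s = k" by (metis bs less_irrefl nonzero_mult_div_cancel_right)
    have "(k * b ^ s) div (b ^ s * b) = (k * b ^ s) div b ^ s div b"
      using b by (simp add: zdiv_zmult2_eq)
    then show "(k * b ^ s) div b ^ (s + 1) = k div b" using bs by (simp only: pw) simp
  qed
  show ?thesis
  proof
    fix x assume "x \<in> fst (ola_iter b N c s st)"
    with main have "x \<in> (fst st - {i \<in> fst st. \<not> b dvd (i div b ^ s)}) \<union>
     {(i div b ^ (s + 1) + m) * b ^ (s + 1) | i m. i \<in> fst st \<and> \<not> b dvd (i div b ^ s)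
         \<and> m \<in> {- (N div 2) + 1 .. N div 2}}" by (rule subsetD)
    then show "x \<in> SS b N (Suc s) ?L'"
    proof (rule UnE)
      assume "x \<in> fst st - {i \<in> fst st. \<not> b dvd (i div b ^ s)}"
      then have xK: "x \<in> fst st" and dv: "b dvd (x div b ^ s)" by auto
      have "x \<in> (\<lambda>k. k * b ^ s) ` {L..<L + 2 * N}" using xK K unfolding SS_def by blast
      then obtain k where k0: "k \<in> {L..<L + 2 * N}" "x = k * b ^ s" by (rule imageE)
      then have k: "x = k * b ^ s" "L \<le> k" "k < L + 2 * N" by auto
      from dv k(1) divk(1)[of k] have "b dvd k" by simp
      then have xe: "x = (k div b) * b ^ Suc s" using k(1) by (metis dvd_div_mult_self mult.assoc power_Suc)
      have r: "L div b \<le> k div b \<and> k div b \<le> L div b + N" using div_range[OF b _ k(2,3)] N by simp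
      show ?thesis unfolding SS_def
        apply (rule image_eqI[where x="k div b"])
         apply (rule xe)
        using r N2 by simp
    next
      assume "x \<in> {(i div b ^ (s + 1) + m) * b ^ (s + 1) | i m. i \<in> fst st \<and> \<not> b dvd (i div b ^ s)
         \<and> m \<in> {- (N div 2) + 1 .. N div 2}}"
      then obtain i m where im: "x = (i div b ^ (s + 1) + m) * b ^ (s + 1)" "i \<in> fst st"
        "m \<in> {- (N div 2) + 1 .. N div 2}" by auto
      have "i \<in> (\<lambda>k. k * b ^ s) ` {L..<L + 2 * N}" using im(2) K unfolding SS_def by blast
      then obtain k where k0: "k \<in> {L..<L + 2 * N}" "i = k * b ^ s" by (rule imageE)
      then have k: "i = k * b ^ s" "L \<le> k" "k < L + 2 * N" by auto
      have x: "x = (k div b + m) * b ^ Suc s" using im(1) k(1) divk(2)[of k] by simp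
      have r: "L div b \<le> k div b \<and> k div b \<le> L div b + N" using div_range[OF b _ k(2,3)] N by simp
      show ?thesis unfolding SS_def
        apply (rule image_eqI[where x="k div b + m"])
         apply (rule x)
        using r N2 im(3) by simp
    qed
  qed
qed

lemma state_inv:
  fixes b N :: int
  assumes b: "b \<ge> 2" and N: "N \<ge> 2" and "even N"
  shows "\<exists>L. fst (ola_state b N c j \<Delta> s) \<subseteq> SS b N s L"
proof (induction s)
  case 0
  have "j \<in> SS b N 0 j" unfolding SS_def using N by (auto intro!: image_eqI[of _ _ j])
  then show ?case by auto
next
  case (Suc s)
  then obtain L where "fst (ola_state b N c j \<Delta> s) \<subseteq> SS b N s L" by auto
  from iter_step[OF assms this] show ?case by auto
qed

theorem proposition5:
  fixes b N :: int and c :: "int \<Rightarrow> real" and \<beta> :: nat and j :: int and \<Delta> :: real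
  assumes "b \<ge> 2" and "N \<ge> 2" and "even N" and "j \<ge> 0"
  shows "\<forall>s \<le> \<beta>.
           int (card (fst (ola_state b N c j \<Delta> s))) \<le> 2 * N \<and>
           int (card (fst (ola_iter b N c s (ola_state b N c j \<Delta> s)))) \<le> 2 * N"
proof (intro allI impI)
  fix s :: nat
  have bnd: "int (card (fst (ola_state b N c j \<Delta> t))) \<le> 2 * N" for t
  proof -
    obtain L where L: "fst (ola_state b N c j \<Delta> t) \<subseteq> SS b N t L"
      using state_inv[OF assms(1-3)] by blast
    have "finite (SS b N t L)" unfolding SS_def by simp
    then have "card (fst (ola_state b N c j \<Delta> t)) \<le> card (SS b N t L)" using L by (rule card_mono)
    then show ?thesis using SS_card[of N b t L] assms(2) by linarith
  qed
  show "int (card (fst (ola_state b N c j \<Delta> s))) \<le> 2 * N \<and>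
        int (card (fst (ola_iter b N c s (ola_state b N c j \<Delta> s)))) \<le> 2 * N"
    using bnd[of s] bnd[of "Suc s"] by simp
qed

end
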